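(* Let $n$ be a positive integer, $g=3n+2$, and let $G=\{\ell_1<\dots<\ell_g\}$ be a pseudo-symmetric pure $(2n+1)$-sparse gapset of genus $g$ with multiplicity $m$. Then $G$ has depth $3$, its canonical partition is $G=G_0\cup G_1\cup G_2$ with $G_2=\{\ell_g\}$ and $\#G_1=n+1$, and moreover $\ell_{g-1}=2m-1$, $\ell_g=3m-1$, and $\alpha=g-1$, where $\alpha=\max\{i:\ell_{i+1}-\ell_i=2n+1\}$.
   Context: A gapset is a finite set $G\subset\mathbb{N}=\{1,2,\dots\}$ such that whenever $z\in G$ and $z=x+y$ with $x,y\in\mathbb{N}$, then $x\in G$ or $y\in G$; its genus is $g=\#G$. Multiplicity $m(G)=\min\{s\in\mathbb{N}:s\notin G\}$; conductor $c(G)=\min\{s\in\mathbb{N}: s+t\notin G\ \forall t\in\mathbb{N}_0\}$; Frobenius number $F(G)=c(G)-1=\ell_g$; depth $q=\lceil c(G)/m(G)\rceil$. The canonical partition is $G=G_0\cup\dots\cup G_{q-1}$ with $G_i=G\cap[im+1,(i+1)m-1]$ (so $G_0=[1,m-1]$). $G$ is pseudo-symmetric if $F(G)=2g-2$. $G$ is pure $\kappa$-sparse if $\ell_{i+1}-\ell_i\le\kappa$ for all $i$ with equality for some $i$. *)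

theory Defs
  imports Complex_Main
begin

definition gapset :: "nat set \<Rightarrow> bool" where
  "gapset G \<longleftrightarrow> finite G \<and> 0 \<notin> G \<and>
     (\<forall>z\<in>G. \<forall>x y. 0 < x \<and> 0 < y \<and> z = x + y \<longrightarrow> x \<in> G \<or> y \<in> G)"

definition genus :: "nat set \<Rightarrow> nat" where
  "genus G = card G"

definition multiplicity :: "nat set \<Rightarrow> nat" where
  "multiplicity G = (LEAST s. 1 \<le> s \<and> s \<notin> G)"

definition conductor :: "nat set \<Rightarrow> nat" where
  "conductor G = (LEAST s. 1 \<le> s \<and> (\<forall>t. s + t \<notin> G))"

definition frobenius :: "nat set \<Rightarrow> nat" where
  "frobenius G = conductor G - 1"

definition depth :: "nat set \<Rightarrow> nat" where
  "depth G = nat \<lceil>real (conductor G) / real (multiplicity G)\<rceil>"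

definition canon_part :: "nat set \<Rightarrow> nat \<Rightarrow> nat set" where
  "canon_part G i = G \<inter> {i * multiplicity G + 1 .. (i + 1) * multiplicity G - 1}"

definition ell :: "nat set \<Rightarrow> nat \<Rightarrow> nat" where
  "ell G i = sorted_list_of_set G ! (i - 1)"

definition pseudo_symmetric :: "nat set \<Rightarrow> bool" where
  "pseudo_symmetric G \<longleftrightarrow> frobenius G = 2 * genus G - 2"

definition pure_sparse :: "nat \<Rightarrow> nat set \<Rightarrow> bool" where
  "pure_sparse \<kappa> G \<longleftrightarrow>
     (\<forall>i. 1 \<le> i \<and> i < genus G \<longrightarrow> ell G (i + 1) - ell G i \<le> \<kappa>) \<and>
     (\<exists>i. 1 \<le> i \<and> i < genus G \<and> ell G (i + 1) - ell G i = \<kappa>)"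

definition alpha :: "nat \<Rightarrow> nat set \<Rightarrow> nat" where
  "alpha \<kappa> G = Max {i. 1 \<le> i \<and> i < genus G \<and> ell G (i + 1) - ell G i = \<kappa>}"

end

theory Submission
  imports Defs
begin

lemma ell_in:
  assumes "finite G" "1 \<le> i" "i \<le> card G"
  shows "ell G i \<in> G"
proof -
  have "sorted_list_of_set G ! (i - 1) \<in> set (sorted_list_of_set G)"
    using assms by (intro nth_mem) (simp add: length_sorted_list_of_set)
  thus ?thesis using assms by (simp add: ell_def set_sorted_list_of_set)
qed

lemma ell_mono:
  assumes "finite G" "1 \<le> i" "i < j" "j \<le> card G"
  shows "ell G i < ell G j"
proof -
  have "sorted_wrt (<) (sorted_list_of_set G)" by (simp add: strict_sorted_list_of_set)
  moreover have "i - 1 < j - 1" "j - 1 < length (sorted_list_of_set G)" using assms by auto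
  ultimately show ?thesis unfolding ell_def by (rule sorted_wrt_nth_less)
qed

lemma ell_surj:
  assumes "finite G" "x \<in> G"
  shows "\<exists>j. 1 \<le> j \<and> j \<le> card G \<and> ell G j = x"
proof -
  have "x \<in> set (sorted_list_of_set G)" using assms by (simp add: set_sorted_list_of_set)
  then obtain k where k: "k < length (sorted_list_of_set G)" "sorted_list_of_set G ! k = x"
    by (auto simp: in_set_conv_nth)
  show ?thesis using k
    by (intro exI[of _ "k+1"]) (auto simp: ell_def length_sorted_list_of_set)
qed

lemma ell_last:
  assumes "finite G" "G \<noteq> {}"
  shows "ell G (card G) = Max G"
proof -
  have c: "card G \<ge> 1" using assms by (simp add: Suc_leI card_gt_0_iff)
  obtain j where j: "1 \<le> j" "j \<le> card G" "ell G j = Max G"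
    using ell_surj[OF assms(1) Max_in[OF assms]] by blast
  have "ell G (card G) \<in> G" using ell_in[OF assms(1) c] by simp
  hence "ell G (card G) \<le> Max G" using assms by simp
  moreover have "ell G j \<le> ell G (card G)"
    using ell_mono[OF assms(1) j(1), of "card G"] j by (cases "j = card G") auto
  ultimately show ?thesis using j by simp
qed

lemma ell_between:
  assumes "finite G" "1 \<le> i" "i < card G" "x \<in> G" "ell G i < x"
  shows "ell G (i+1) \<le> x"
proof (rule ccontr)
  assume "\<not> ?thesis"
  hence x: "x < ell G (i+1)" by simp
  obtain j where j: "1 \<le> j" "j \<le> card G" "ell G j = x" using ell_surj[OF assms(1,4)] by blast
  have "\<not> j \<le> i"
  proof
    assume "j \<le> i"
    then have "ell G j \<le> ell G i" using ell_mono[OF assms(1) j(1), of i] assms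
      by (cases "j = i") auto
    thus False using j assms by simp
  qed
  moreover have "\<not> j \<ge> i + 1"
  proof
    assume "j \<ge> i+1"
    then have "ell G (i+1) \<le> ell G j" using ell_mono[OF assms(1), of "i+1" j] assms j
      by (cases "j = i+1") auto
    thus False using j x by simp
  qed
  ultimately show False by simp
qed

lemma gap_add:
  assumes "gapset G" "x \<notin> G" "y \<notin> G" "0 < x" "0 < y"
  shows "x + y \<notin> G"
  using assms unfolding gapset_def by blast

lemma conductor_eq:
  assumes "finite G" "G \<noteq> {}"
  shows "conductor G = Max G + 1"
  unfolding conductor_def
proof (rule Least_equality)
  have "\<And>t. Max G + 1 + t \<notin> G"
  proof
    fix t assume "Max G + 1 + t \<in> G"
    hence "Max G + 1 + t \<le> Max G" by (rule Max_ge[OF assms(1)])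
    thus False by simp
  qed
  thus "1 \<le> Max G + 1 \<and> (\<forall>t. Max G + 1 + t \<notin> G)" by simp
next
  fix s assume s: "1 \<le> s \<and> (\<forall>t. s + t \<notin> G)"
  show "Max G + 1 \<le> s"
  proof (rule ccontr)
    assume "\<not> ?thesis"
    hence "s + (Max G - s) = Max G" by simp
    moreover have "s + (Max G - s) \<notin> G" using s by blast
    ultimately show False using Max_in[OF assms] by simp
  qed
qed

lemma mult_props:
  assumes "finite G"
  shows "1 \<le> multiplicity G" "multiplicity G \<notin> G" "\<And>s. 1 \<le> s \<Longrightarrow> s < multiplicity G \<Longrightarrow> s \<in> G"
proof -
  define s where "s = Max (insert 0 G) + 1"
  have "s \<notin> G"
  proof
    assume "s \<in> G"
    hence "s \<le> Max (insert 0 G)" using assms by (intro Max_ge) auto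
    thus False unfolding s_def by simp
  qed
  hence s: "1 \<le> s \<and> s \<notin> G" unfolding s_def by simp
  show "1 \<le> multiplicity G" "multiplicity G \<notin> G"
    using LeastI[of "\<lambda>s. 1 \<le> s \<and> s \<notin> G", OF s] unfolding multiplicity_def by auto
  fix t assume "1 \<le> t" "t < multiplicity G"
  thus "t \<in> G" using not_less_Least[of t "\<lambda>s. 1 \<le> s \<and> s \<notin> G"] unfolding multiplicity_def by auto
qed

lemma sym_gap:
  assumes gs: "gapset G" and ne: "G \<noteq> {}" and F: "Max G = 2 * card G - 2" and g3: "card G \<ge> 3"
    and y: "y \<in> G" "y \<noteq> Max G" "2 * y \<noteq> Max G"
  shows "Max G - y \<notin> G"
proof -
  define F where "F = Max G"
  define g where "g = card G"
  have fin: "finite G" and z: "0 \<notin> G" using gs unfolding gapset_def by auto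
  have FG: "F \<in> G" unfolding F_def using Max_in[OF fin ne] .
  have le: "\<And>x. x \<in> G \<Longrightarrow> x \<le> F" unfolding F_def using Max_ge[OF fin] by blast
  have pos: "\<And>x. x \<in> G \<Longrightarrow> 1 \<le> x" using z by (metis less_one not_less)
  define N where "N = {x. 1 \<le> x \<and> x < F \<and> x \<notin> G}"
  have split: "{1..<F} = N \<union> (G - {F})" unfolding N_def using le pos
    by (auto simp: nat_less_le)
  have "card {1..<F} = card N + card (G - {F})"
    unfolding split by (rule card_Un_disjoint) (auto simp: N_def fin)
  hence cN: "card N = g - 2" using F g3 FG fin unfolding F_def g_def by simp
  define h where "h = F div 2"
  have "F = 2 * (card G - 1)" unfolding F_def using F by simp
  hence hh: "h + h = F" unfolding h_def by simp
  have h1: "0 < h" unfolding h_def F_def using F g3 by simp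
  have hG: "h \<in> G"
  proof (rule ccontr)
    assume "h \<notin> G"
    hence "h + h \<notin> G" using gap_add[OF gs] h1 by blast
    thus False using hh FG by simp
  qed
  have hF: "h \<noteq> F" using hh h1 by simp
  have sub: "(\<lambda>x. F - x) ` N \<subseteq> G - {F, h}"
  proof
    fix w assume "w \<in> (\<lambda>x. F - x) ` N"
    then obtain x where x: "x \<in> N" "w = F - x" by blast
    have x1: "1 \<le> x" "x < F" "x \<notin> G" using x unfolding N_def by auto
    have "F - x \<in> G"
    proof (rule ccontr)
      assume "F - x \<notin> G"
      moreover have "0 < F - x" using x1 by simp
      ultimately have "x + (F - x) \<notin> G" using x1 by (intro gap_add[OF gs x1(3)]) auto
      thus False using x1 FG by simp
    qed
    moreover have "F - x \<noteq> F" using x1 by simp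
    moreover have "F - x \<noteq> h"
    proof
      assume "F - x = h"
      hence "x = h" using hh x1 by linarith
      thus False using x1 hG by simp
    qed
    ultimately show "w \<in> G - {F, h}" using x by simp
  qed
  have inj: "inj_on (\<lambda>x. F - x) N" unfolding N_def by (rule inj_onI) auto
  have "card ((\<lambda>x. F - x) ` N) = g - 2" using card_image[OF inj] cN by simp
  moreover have "card (G - {F, h}) = g - 2" using FG hG hF fin unfolding g_def by (simp add: card_Diff_subset)
  ultimately have eq: "(\<lambda>x. F - x) ` N = G - {F, h}"
    using card_subset_eq[OF _ sub] fin by simp
  have "y \<noteq> h" using y(3) hh unfolding F_def by auto
  hence "y \<in> (\<lambda>x. F - x) ` N" using eq y unfolding F_def by simp
  then obtain x where "x \<in> N" "y = F - x" by blast
  thus ?thesis unfolding F_def N_def by auto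
qed

theorem mainTheorem13:
  fixes n :: nat and G :: "nat set"
  assumes "0 < n"
    and "gapset G"
    and "genus G = 3 * n + 2"
    and "pseudo_symmetric G"
    and "pure_sparse (2 * n + 1) G"
  shows "depth G = 3
    \<and> G = canon_part G 0 \<union> canon_part G 1 \<union> canon_part G 2
    \<and> canon_part G 2 = {ell G (genus G)}
    \<and> card (canon_part G 1) = n + 1
    \<and> ell G (genus G - 1) = 2 * multiplicity G - 1
    \<and> ell G (genus G) = 3 * multiplicity G - 1
    \<and> alpha (2 * n + 1) G = genus G - 1"
proof -
  note n0 = assms(1) and gs = assms(2)
  have fin: "finite G" and z: "0 \<notin> G" using gs unfolding gapset_def by auto
  have cg: "card G = 3 * n + 2" using assms(3) unfolding genus_def .
  have ne: "G \<noteq> {}" using cg by auto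
  have cond: "conductor G = Max G + 1" by (rule conductor_eq[OF fin ne])
  have MF: "Max G = 6 * n + 2" using assms(4) cg cond
    unfolding pseudo_symmetric_def frobenius_def genus_def by simp
  have FG: "6 * n + 2 \<in> G" using Max_in[OF fin ne] MF by simp
  have le: "\<And>x. x \<in> G \<Longrightarrow> x \<le> 6 * n + 2" using Max_ge[OF fin] MF by metis
  have pos: "\<And>x. x \<in> G \<Longrightarrow> 1 \<le> x" using z by (metis less_one not_less)
  have sym: "\<And>y. y \<in> G \<Longrightarrow> y \<noteq> 6 * n + 2 \<Longrightarrow> 2 * y \<noteq> 6 * n + 2 \<Longrightarrow> 6 * n + 2 - y \<notin> G"
    using sym_gap[OF gs ne] cg MF n0 by simp
  have ellg: "ell G (3 * n + 2) = 6 * n + 2" using ell_last[OF fin ne] cg MF by simp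
  define m where "m = multiplicity G"
  have m1: "1 \<le> m" and mG: "m \<notin> G" and below: "\<And>s. 1 \<le> s \<Longrightarrow> s < m \<Longrightarrow> s \<in> G"
    using mult_props[OF fin] unfolding m_def by auto
  have sp1: "\<And>i. 1 \<le> i \<Longrightarrow> i < 3 * n + 2 \<Longrightarrow> ell G (i + 1) - ell G i \<le> 2 * n + 1"
    using assms(5) cg unfolding pure_sparse_def genus_def by auto
  obtain i where i: "1 \<le> i" "i < 3 * n + 2" "ell G (i + 1) - ell G i = 2 * n + 1"
    using assms(5) cg unfolding pure_sparse_def genus_def by auto
  have mlow: "m \<ge> 2 * n + 1"
  proof (rule ccontr)
    assume "\<not> ?thesis"
    hence mle: "m \<le> 2 * n" by simp
    define a where "a = ell G i"
    have lt: "ell G i < ell G (i + 1)" using ell_mono[OF fin i(1), of "i+1"] i cg by simp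
    hence ai: "ell G (i + 1) = a + 2 * n + 1" using i(3) unfolding a_def by simp
    define x where "x = a + 2 * n + 1 - m"
    have xG: "x \<notin> G"
    proof
      assume "x \<in> G"
      moreover have "ell G i < x" unfolding x_def a_def using mle by simp
      ultimately have "ell G (i + 1) \<le> x" using ell_between[OF fin i(1)] i cg by simp
      thus False using ai m1 unfolding x_def by simp
    qed
    have "x + m \<notin> G" using gap_add[OF gs xG mG] m1 mle unfolding x_def by simp
    moreover have "x + m = ell G (i + 1)" using ai mle unfolding x_def by simp
    moreover have "ell G (i + 1) \<in> G" using ell_in[OF fin] i cg by simp
    ultimately show False by simp
  qed
  define b where "b = ell G (3 * n + 1)"
  have bG: "b \<in> G" unfolding b_def using ell_in[OF fin] cg by simp
  have bF: "b < 6 * n + 2" unfolding b_def using ell_mono[OF fin, of "3*n+1" "3*n+2"] cg ellg by simp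
  have bge: "6 * n + 2 - b \<le> 2 * n + 1" using sp1[of "3*n+1"] ellg unfolding b_def by simp
  have mup: "m \<le> 2 * n + 1"
  proof (rule ccontr)
    assume "\<not> ?thesis"
    define j where "j = 6 * n + 2 - b"
    have "j \<in> G" using below[of j] bF bge \<open>\<not> m \<le> 2 * n + 1\<close> unfolding j_def by simp
    moreover have "j \<noteq> 6 * n + 2" "2 * j \<noteq> 6 * n + 2" using bge n0 unfolding j_def by auto
    ultimately have "6 * n + 2 - j \<notin> G" using sym by blast
    thus False using bG bF unfolding j_def by simp
  qed
  have m: "m = 2 * n + 1" using mlow mup by simp
  have g2: "4 * n + 2 \<notin> G" using gap_add[OF gs mG mG] m by simp
  have g41: "4 * n + 1 \<in> G"
  proof (rule ccontr)
    assume a: "4 * n + 1 \<notin> G"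
    have "(4 * n + 1) + m \<notin> G" by (rule gap_add[OF gs a mG]) (use m1 in auto)
    thus False using FG m by simp
  qed
  have hi: "\<And>x. x \<in> G \<Longrightarrow> 4 * n + 3 \<le> x \<Longrightarrow> x \<le> 6 * n + 1 \<Longrightarrow> False"
  proof -
    fix x assume x: "x \<in> G" "4 * n + 3 \<le> x" "x \<le> 6 * n + 1"
    define y where "y = 6 * n + 2 - x"
    have "y \<in> G" using below[of y] x m unfolding y_def by simp
    moreover have "y \<noteq> 6 * n + 2" "2 * y \<noteq> 6 * n + 2" using x n0 unfolding y_def by auto
    ultimately have "6 * n + 2 - y \<notin> G" using sym by blast
    thus False using x unfolding y_def by simp
  qed
  have bv: "b = 4 * n + 1"
  proof -
    have "b \<ge> 4 * n + 1" using bge bF by simp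
    moreover have "b \<noteq> 4 * n + 2" using bG g2 by auto
    moreover have "\<not> (4 * n + 3 \<le> b \<and> b \<le> 6 * n + 1)" using hi bG by blast
    ultimately show ?thesis using bF by linarith
  qed
  have mG2: "multiplicity G = 2 * n + 1" using m m_def by simp
  have cp0: "canon_part G 0 = {1..2 * n}"
    unfolding canon_part_def mG2 using below m by auto
  have cp1: "canon_part G 1 = G \<inter> {2 * n + 2..4 * n + 1}"
    unfolding canon_part_def mG2 by (intro arg_cong2[where f="(\<inter>)"] refl arg_cong2[where f=atLeastAtMost]) simp_all
  have cp2: "canon_part G 2 = {6 * n + 2}"
  proof -
    have "canon_part G 2 = G \<inter> {4 * n + 3..6 * n + 2}"
      unfolding canon_part_def mG2 by (intro arg_cong2[where f="(\<inter>)"] refl arg_cong2[where f=atLeastAtMost]) simp_all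
    also have "\<dots> = {6 * n + 2}"
    proof (intro equalityI subsetI)
      fix x assume "x \<in> G \<inter> {4 * n + 3..6 * n + 2}"
      hence "x \<in> G" "4 * n + 3 \<le> x" "x \<le> 6 * n + 2" by auto
      thus "x \<in> {6 * n + 2}" using hi[of x] by (cases "x = 6 * n + 2") auto
    qed (use FG n0 in auto)
    finally show ?thesis .
  qed
  have un: "G = canon_part G 0 \<union> canon_part G 1 \<union> canon_part G 2"
  proof
    show "canon_part G 0 \<union> canon_part G 1 \<union> canon_part G 2 \<subseteq> G"
      unfolding canon_part_def by auto
  next
    show "G \<subseteq> canon_part G 0 \<union> canon_part G 1 \<union> canon_part G 2"
    proof
      fix x assume x: "x \<in> G"
      have "x \<noteq> 2 * n + 1" using x mG m by auto
      moreover have "x \<noteq> 4 * n + 2" using x g2 by auto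
      moreover have "\<not> (4 * n + 3 \<le> x \<and> x \<le> 6 * n + 1)" using hi x by blast
      moreover note le[OF x] pos[OF x]
      ultimately have "x \<le> 2 * n \<or> (2 * n + 2 \<le> x \<and> x \<le> 4 * n + 1) \<or> x = 6 * n + 2"
        by linarith
      thus "x \<in> canon_part G 0 \<union> canon_part G 1 \<union> canon_part G 2"
        unfolding cp0 cp1 cp2 using x pos[OF x] by auto
    qed
  qed
  have card1: "card (canon_part G 1) = n + 1"
  proof -
    have f1: "finite (canon_part G 1)" unfolding cp1 using fin by simp
    have d1: "canon_part G 0 \<inter> canon_part G 1 = {}" unfolding cp0 cp1 by auto
    have d2: "(canon_part G 0 \<union> canon_part G 1) \<inter> canon_part G 2 = {}" unfolding cp0 cp1 cp2 by auto
    have "card G = card (canon_part G 0 \<union> canon_part G 1) + card (canon_part G 2)"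
      by (subst un, rule card_Un_disjoint) (use f1 d2 in \<open>auto simp: cp0 cp2\<close>)
    also have "card (canon_part G 0 \<union> canon_part G 1) = card (canon_part G 0) + card (canon_part G 1)"
      by (rule card_Un_disjoint) (use f1 d1 in \<open>auto simp: cp0\<close>)
    finally show ?thesis using cg cp0 cp2 by simp
  qed
  have alph: "alpha (2 * n + 1) G = 3 * n + 1"
    unfolding alpha_def genus_def cg
  proof (rule Max_eqI)
    show "finite {i. 1 \<le> i \<and> i < 3 * n + 2 \<and> ell G (i + 1) - ell G i = 2 * n + 1}"
      by (rule finite_subset[of _ "{..<3*n+2}"]) auto
    show "\<And>y. y \<in> {i. 1 \<le> i \<and> i < 3 * n + 2 \<and> ell G (i + 1) - ell G i = 2 * n + 1} \<Longrightarrow> y \<le> 3 * n + 1"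
      by auto
    show "3 * n + 1 \<in> {i. 1 \<le> i \<and> i < 3 * n + 2 \<and> ell G (i + 1) - ell G i = 2 * n + 1}"
      using ellg bv unfolding b_def by simp
  qed
  have dep: "depth G = 3"
  proof -
    have "real (conductor G) = 3 * real (multiplicity G)" using cond MF mG2 by simp
    moreover have "real (multiplicity G) > 0" using mG2 by simp
    ultimately have "real (conductor G) / real (multiplicity G) = 3" by simp
    thus ?thesis unfolding depth_def by simp
  qed
  show ?thesis
    using dep un cp2 card1 bv ellg alph mG2 cg unfolding genus_def b_def by simp
qed

end
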